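(* Let $n\ge 4$, let $r_1,r_2,r_3\in\mathbb{Z}_+$ with $r_1+r_2+r_3=n-1$, and let $\alpha_1,\alpha_2,\alpha_3$ be reals with $-1<\alpha_1<1$, $0\le\alpha_2,\alpha_3<1$, $\alpha_1+\alpha_2+\alpha_3=1$, $r_1+\alpha_1\ge r_2+\alpha_2$ and $r_1+\alpha_1\ge r_3+\alpha_3$. Then $$\mathfrak{L}_n(r_1,r_2,r_3,\alpha_1,\alpha_2,\alpha_3)\le \mathfrak{L}_n(n-1,0,0,\alpha_1,\alpha_2,\alpha_3)+2^{2n/3}(10+2\ln n).$$
   Context: Points of a triangle are identified with barycentric coordinates $\lambda=(\lambda_1,\lambda_2,\lambda_3)$, $\lambda_r\ge0$, $\sum\lambda_r=1$. For an integer $n\ge1$ let $I=\{i=(i_1,i_2,i_3)\in\mathbb{Z}_+^3: i_1+i_2+i_3=n\}$, and let $l_i(\lambda)=\prod_{s=1}^{3}\frac{1}{i_s!}\prod_{t=0}^{i_s-1}(n\lambda_s-t)$ (the Lagrange fundamental polynomials for the equally spaced nodes $i/n$, $i\in I$). The Lebesgue function is $\mathcal{L}_n(\lambda)=\sum_{i\in I}|l_i(\lambda)|$. For $r_s\in\mathbb{Z}_+$ with $r_1+r_2+r_3=n-1$ and reals $\alpha_s$ with $\alpha_1+\alpha_2+\alpha_3=1$, write $\mathfrak{L}_n(r_1,r_2,r_3,\alpha_1,\alpha_2,\alpha_3)=\mathcal{L}_n(\lambda)$ where $\lambda_s=(r_s+\alpha_s)/n$, $s=1,2,3$. *)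

theory Defs
  imports Complex_Main
begin

definition idx :: "nat \<Rightarrow> (nat \<times> nat \<times> nat) set" where
  "idx n = {(i1, i2, i3). i1 + i2 + i3 = n}"

definition lfac :: "nat \<Rightarrow> nat \<Rightarrow> real \<Rightarrow> real" where
  "lfac n k x = (1 / fact k) * (\<Prod>t<k. (real n * x - real t))"

text \<open>Lagrange fundamental polynomial l_i at barycentric point (x1,x2,x3).\<close>
definition lagr :: "nat \<Rightarrow> nat \<times> nat \<times> nat \<Rightarrow> real \<Rightarrow> real \<Rightarrow> real \<Rightarrow> real" where
  "lagr n i x1 x2 x3 = (case i of (i1, i2, i3) \<Rightarrow> lfac n i1 x1 * lfac n i2 x2 * lfac n i3 x3)"

definition lebesgue :: "nat \<Rightarrow> real \<Rightarrow> real \<Rightarrow> real \<Rightarrow> real" where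
  "lebesgue n x1 x2 x3 = (\<Sum>i\<in>idx n. \<bar>lagr n i x1 x2 x3\<bar>)"

definition frakL :: "nat \<Rightarrow> nat \<Rightarrow> nat \<Rightarrow> nat \<Rightarrow> real \<Rightarrow> real \<Rightarrow> real \<Rightarrow> real" where
  "frakL n r1 r2 r3 a1 a2 a3 =
     lebesgue n ((real r1 + a1) / real n) ((real r2 + a2) / real n) ((real r3 + a3) / real n)"

lemma finite_idx: "finite (idx n)"
proof -
  have "idx n \<subseteq> {..n} \<times> {..n} \<times> {..n}" by (auto simp: idx_def)
  thus ?thesis by (rule finite_subset) auto
qed

end

theory Submission
  imports Defs
begin

lemma gb_Suc: "(y::real) gchoose (Suc k) = (y gchoose k) * (y - real k) / (real k + 1)"
proof -
  have "fact (Suc k) * (y gchoose Suc k) = (fact k * (y gchoose k)) * (y - real k)"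
    unfolding gbinomial_mult_fact by (simp add: prod.atLeast0_lessThan_Suc)
  then have "fact k * ((y gchoose Suc k) * (real k + 1)) = fact k * ((y gchoose k) * (y - real k))"
    by (simp add: algebra_simps)
  then have "(y gchoose Suc k) * (real k + 1) = (y gchoose k) * (y - real k)"
    by (metis fact_nonzero mult_left_cancel)
  then show ?thesis by (simp add: field_simps)
qed

lemma gb_nonneg: "real K \<le> y \<Longrightarrow> k \<le> K + 1 \<Longrightarrow> 0 \<le> (y::real) gchoose k"
proof (induction k)
  case 0 then show ?case by simp
next
  case (Suc k)
  then have "0 \<le> y gchoose k" "0 \<le> y - real k" by auto
  then show ?case by (simp add: gb_Suc)
qed

lemma gb_le_binom:
  assumes "real F \<le> x" "x < real F + 1"
  shows "k \<le> F + 1 \<Longrightarrow> \<bar>x gchoose k\<bar> \<le> real (F+1) gchoose k"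
proof (induction k)
  case 0 then show ?case by simp
next
  case (Suc k)
  then have ih: "\<bar>x gchoose k\<bar> \<le> real (F+1) gchoose k" by simp
  have h1: "0 \<le> x - real k" "x - real k \<le> real (F+1) - real k" using Suc.prems assms by auto
  have "\<bar>x gchoose Suc k\<bar> = \<bar>x gchoose k\<bar> * (x - real k) / (real k + 1)"
    using h1 by (simp add: gb_Suc abs_mult)
  also have "\<dots> \<le> (real (F+1) gchoose k) * (real (F+1) - real k) / (real k + 1)"
    using gb_nonneg[of "F+1" "real (F+1)" k] Suc.prems
    by (intro divide_right_mono mult_mono ih h1) auto
  also have "\<dots> = real (F+1) gchoose Suc k" by (simp add: gb_Suc)
  finally show ?case .
qed

lemma gb_le_one:
  assumes "real F \<le> x" "x < real F + 1"
  shows "F + 1 \<le> k \<Longrightarrow> \<bar>x gchoose k\<bar> \<le> 1"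
proof (induction k rule: dec_induct)
  case base
  have "\<bar>x gchoose (F+1)\<bar> \<le> real (F+1) gchoose (F+1)" by (rule gb_le_binom[OF assms]) simp
  also have "\<dots> = 1" by (simp only: binomial_gbinomial[symmetric]) simp
  finally show ?case .
next
  case (step k)
  have h: "\<bar>x - real k\<bar> \<le> real k + 1" using assms step by auto
  have "\<bar>x gchoose Suc k\<bar> = \<bar>x gchoose k\<bar> * \<bar>x - real k\<bar> / (real k + 1)"
    by (simp add: gb_Suc abs_mult)
  also have "\<dots> \<le> 1 * (real k + 1) / (real k + 1)"
    by (intro divide_right_mono mult_mono step h) auto
  finally show ?case by simp
qed

lemma gb_le_pow:
  assumes "real F \<le> x" "x < real F + 1"
  shows "\<bar>x gchoose k\<bar> \<le> 2 ^ (F+1)"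
proof (cases "k \<le> F + 1")
  case True
  have "\<bar>x gchoose k\<bar> \<le> real (F+1) gchoose k" by (rule gb_le_binom[OF assms True])
  also have "\<dots> = real ((F+1) choose k)" by (simp only: binomial_gbinomial)
  also have "\<dots> \<le> 2 ^ (F+1)" using binomial_le_pow2[of "F+1" k]
    by (metis of_nat_le_iff of_nat_numeral of_nat_power)
  finally show ?thesis .
next
  case False
  then have "\<bar>x gchoose k\<bar> \<le> 1" using gb_le_one[OF assms] by simp
  also have "(1::real) \<le> 2 ^ (F+1)" by (rule one_le_power) simp
  finally show ?thesis .
qed

lemma gb_le_binom1:
  assumes "real F \<le> x" "x < real F + 1"
  shows "\<bar>x gchoose k\<bar> \<le> real ((F+1) choose k) + 1"
proof (cases "k \<le> F + 1")
  case True
  have "\<bar>x gchoose k\<bar> \<le> real (F+1) gchoose k" by (rule gb_le_binom[OF assms True])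
  also have "\<dots> = real ((F+1) choose k)" by (simp only: binomial_gbinomial)
  finally show ?thesis by simp
next
  case False
  then have "\<bar>x gchoose k\<bar> \<le> 1" using gb_le_one[OF assms, of k] by simp
  then show ?thesis by simp
qed

lemma gb_abs_Suc: "\<bar>(y::real) gchoose (Suc k)\<bar> = \<bar>y gchoose k\<bar> * \<bar>y - real k\<bar> / (real k + 1)"
  by (simp add: gb_Suc abs_mult)

lemma tail_sum:
  fixes z :: real
  assumes K1: "1 \<le> K" and zK: "real K \<le> z" "z < real K + 1"
  shows "(\<Sum>i\<in>{K+2..m}. \<bar>z gchoose i\<bar>) \<le> 1 / (4 * real K)"
proof -
  define u where "u i = \<bar>z gchoose i\<bar>" for i
  have u0: "0 \<le> u i" for i by (simp add: u_def)
  have uK: "u K \<le> real K + 1"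
  proof -
    have "u K \<le> real (K+1) gchoose K" unfolding u_def by (rule gb_le_binom[OF zK]) simp
    also have "\<dots> = real ((K+1) choose K)" by (simp only: binomial_gbinomial)
    also have "\<dots> = real K + 1" by simp
    finally show ?thesis .
  qed
  have uK2: "u (K+2) = u K * ((z - real K) * (real K + 1 - z)) / ((real K + 1) * (real K + 2))"
  proof -
    have "u (K+2) = u (Suc K) * \<bar>z - real (Suc K)\<bar> / (real (Suc K) + 1)"
      unfolding u_def by (simp add: gb_abs_Suc[of z "Suc K", simplified])
    also have "u (Suc K) = u K * \<bar>z - real K\<bar> / (real K + 1)"
      unfolding u_def by (rule gb_abs_Suc)
    finally show ?thesis using zK by (simp add: abs_of_nonneg abs_of_neg field_simps)
  qed
  have quart: "(z - real K) * (real K + 1 - z) \<le> 1/4"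
  proof -
    have "0 \<le> (2*z - 2*real K - 1) * (2*z - 2*real K - 1)" by simp
    then show ?thesis by (simp add: algebra_simps)
  qed
  have quart0: "0 \<le> (z - real K) * (real K + 1 - z)" using zK by simp
  have uK2b: "u (K+2) \<le> 1 / (4 * (real K + 2))"
  proof -
    have "u (K+2) \<le> (real K + 1) * (1/4) / ((real K + 1) * (real K + 2))"
      unfolding uK2 by (intro divide_right_mono mult_mono uK quart u0 quart0) auto
    also have "\<dots> = 1 / (4 * (real K + 2))"
    proof -
      have "(real K + 1) \<noteq> 0" by simp
      then show ?thesis by (simp only: mult_divide_mult_cancel_left_if) simp
    qed
    finally show ?thesis .
  qed
  have rec: "(real i + 1) * u (Suc i) \<le> (real i - real K) * u i" if "K + 1 \<le> i" for i
  proof -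
    have "(real i + 1) * u (Suc i) = u i * \<bar>z - real i\<bar>"
      unfolding u_def by (simp add: gb_abs_Suc)
    also have "\<bar>z - real i\<bar> \<le> real i - real K" using that zK by auto
    then have "u i * \<bar>z - real i\<bar> \<le> u i * (real i - real K)" by (intro mult_left_mono u0)
    finally show ?thesis by (simp add: mult.commute)
  qed
  have inv: "real K * (\<Sum>i\<in>{K+2..m}. u i) + (real m - real K) * u m \<le> (real K + 2) * u (K+2)"
    if "K + 2 \<le> m" for m
    using that
  proof (induction m rule: dec_induct)
    case base
    then show ?case by (simp add: algebra_simps)
  next
    case (step m)
    have s: "(\<Sum>i\<in>{K+2..Suc m}. u i) = (\<Sum>i\<in>{K+2..m}. u i) + u (Suc m)"
      using step.hyps by (simp add: sum.atLeast_Suc_atMost_Suc_shift atLeastAtMostSuc_conv)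
    have r: "(real m + 1) * u (Suc m) \<le> (real m - real K) * u m" using rec step.hyps by simp
    show ?case using step.IH r unfolding s by (simp add: algebra_simps)
  qed
  show ?thesis
  proof (cases "K + 2 \<le> m")
    case True
    have "real K * (\<Sum>i\<in>{K+2..m}. u i) \<le> (real K + 2) * u (K+2)"
    proof -
      have "0 \<le> (real m - real K) * u m" using True u0[of m] by simp
      then show ?thesis using inv[OF True] by linarith
    qed
    also have "\<dots> \<le> (real K + 2) * (1 / (4 * (real K + 2)))"
      by (intro mult_left_mono uK2b) auto
    also have "\<dots> = 1/4" by (simp add: field_simps)
    finally have "real K * (\<Sum>i\<in>{K+2..m}. u i) \<le> 1/4" .
    then show ?thesis using K1 unfolding u_def by (simp add: field_simps)
  next
    case False
    then show ?thesis by simp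
  qed
qed

lemma idx_nested:
  "(\<Sum>i\<in>idx n. f i) = (\<Sum>k\<le>n. \<Sum>i\<le>n-k. f (i, n-k-i, k))"
proof -
  have "(\<Sum>k\<le>n. \<Sum>i\<le>n-k. f (i, n-k-i, k)) = (\<Sum>(k,i)\<in>(SIGMA k:{..n}. {..n-k}). f (i, n-k-i, k))"
    by (rule sum.Sigma) auto
  also have "\<dots> = (\<Sum>i\<in>idx n. f i)"
    by (rule sum.reindex_bij_witness[where i="\<lambda>(a,b,c). (c, a)" and j="\<lambda>(k,i). (i, n-k-i, k)"])
       (auto simp: idx_def)
  finally show ?thesis by simp
qed

lemma idx_swap:
  "(\<Sum>(a,b,c)\<in>idx n. f a b c) = (\<Sum>(a,b,c)\<in>idx n. f a c b)"
  by (rule sum.reindex_bij_witness[where i="\<lambda>(a,b,c). (a,c,b)" and j="\<lambda>(a,b,c). (a,c,b)"])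
     (auto simp: idx_def)

definition CC :: "real \<Rightarrow> real \<Rightarrow> nat \<Rightarrow> real" where
  "CC z y m = (\<Sum>i\<le>m. \<bar>z gchoose i\<bar> * \<bar>y gchoose (m-i)\<bar>)"

definition LI :: "nat \<Rightarrow> real \<Rightarrow> real \<Rightarrow> real \<Rightarrow> real" where
  "LI n z y w = (\<Sum>k\<le>n. \<bar>w gchoose k\<bar> * CC z y (n-k))"

lemma LI_idx: "LI n z y w = (\<Sum>(a,b,c)\<in>idx n. \<bar>z gchoose a\<bar> * \<bar>y gchoose b\<bar> * \<bar>w gchoose c\<bar>)"
  unfolding LI_def CC_def idx_nested
  by (simp add: sum_distrib_left algebra_simps)

lemma LI_swap: "LI n z y w = LI n z w y"
  unfolding LI_idx by (subst idx_swap) (simp add: algebra_simps)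

lemma lfac_gb: "lfac n k x = (real n * x) gchoose k"
  by (simp add: lfac_def gbinomial_prod_rev atLeast0LessThan)

lemma lebesgue_LI: "lebesgue n x1 x2 x3 = LI n (real n * x1) (real n * x2) (real n * x3)"
  unfolding lebesgue_def LI_idx
  by (rule sum.cong) (auto simp: lagr_def lfac_gb abs_mult)

lemma pas_up: "\<bar>((y::real)+1) gchoose j\<bar> \<le> \<bar>y gchoose j\<bar> + (if j = 0 then 0 else \<bar>y gchoose (j-1)\<bar>)"
proof (cases j)
  case 0 then show ?thesis by simp
next
  case (Suc i)
  have "(y+1) gchoose Suc i = (y gchoose i) + (y gchoose Suc i)" by (rule gbinomial_Suc_Suc)
  then show ?thesis using Suc abs_triangle_ineq[of "y gchoose i" "y gchoose Suc i"] by simp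
qed

lemma pas_low:
  assumes "real K \<le> (z::real)"
  shows "\<bar>z gchoose i\<bar> + (if i = 0 then 0 else \<bar>z gchoose (i-1)\<bar>)
         - (if K + 2 \<le> i then 2 * \<bar>z gchoose i\<bar> else 0) \<le> \<bar>(z+1) gchoose i\<bar>"
proof (cases i)
  case 0 then show ?thesis by simp
next
  case (Suc j)
  have e: "(z+1) gchoose i = (z gchoose j) + (z gchoose i)" using Suc by (simp add: gbinomial_Suc_Suc)
  show ?thesis
  proof (cases "K + 2 \<le> i")
    case True
    then show ?thesis unfolding e using Suc by simp
  next
    case False
    then have "0 \<le> z gchoose j" "0 \<le> z gchoose i" using Suc assms gb_nonneg[of K z] by auto
    then show ?thesis unfolding e using Suc False by simp
  qed
qed

definition EE :: "real \<Rightarrow> real \<Rightarrow> nat \<Rightarrow> nat \<Rightarrow> real" where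
  "EE z y K m = (\<Sum>i\<le>m. if K + 2 \<le> i then \<bar>z gchoose i\<bar> * \<bar>y gchoose (m-i)\<bar> else 0)"

lemma shiftQ1:
  "(\<Sum>i\<le>m. \<bar>z gchoose i\<bar> * (if m - i = 0 then 0 else \<bar>(y::real) gchoose (m-i-1)\<bar>))
   = (if m = 0 then 0 else CC z y (m-1))"
proof (cases m)
  case 0 then show ?thesis by simp
next
  case (Suc m')
  have "(\<Sum>i\<le>Suc m'. \<bar>z gchoose i\<bar> * (if Suc m' - i = 0 then 0 else \<bar>y gchoose (Suc m'-i-1)\<bar>))
       = (\<Sum>i\<le>m'. \<bar>z gchoose i\<bar> * \<bar>y gchoose (m'-i)\<bar>)"
    by (simp add: sum.atMost_Suc Suc_diff_le)
  then show ?thesis using Suc by (simp add: CC_def)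
qed

lemma shiftQ2:
  "(\<Sum>i\<le>m. (if i = 0 then 0 else \<bar>(z::real) gchoose (i-1)\<bar>) * \<bar>(y::real) gchoose (m-i)\<bar>)
   = (if m = 0 then 0 else CC z y (m-1))"
proof (cases m)
  case 0 then show ?thesis by simp
next
  case (Suc m')
  have "(\<Sum>i\<le>Suc m'. (if i = 0 then 0 else \<bar>z gchoose (i-1)\<bar>) * \<bar>y gchoose (Suc m'-i)\<bar>)
       = (\<Sum>i\<le>m'. \<bar>z gchoose i\<bar> * \<bar>y gchoose (m'-i)\<bar>)"
    by (subst sum.atMost_Suc_shift) simp
  then show ?thesis using Suc by (simp add: CC_def)
qed

lemma CC_step:
  assumes "real K \<le> (z::real)"
  shows "CC z (y+1) m \<le> CC (z+1) y m + 2 * EE z y K m"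
proof -
  have "CC z (y+1) m \<le> (\<Sum>i\<le>m. \<bar>z gchoose i\<bar> * (\<bar>y gchoose (m-i)\<bar> + (if m - i = 0 then 0 else \<bar>y gchoose (m-i-1)\<bar>)))"
    unfolding CC_def by (intro sum_mono mult_left_mono pas_up) auto
  also have "\<dots> = CC z y m + (\<Sum>i\<le>m. \<bar>z gchoose i\<bar> * (if m - i = 0 then 0 else \<bar>y gchoose (m-i-1)\<bar>))"
    unfolding CC_def by (simp only: sum.distrib distrib_left)
  also have "\<dots> = CC z y m + (if m = 0 then 0 else CC z y (m-1))"
    by (simp only: shiftQ1)
  also have "\<dots> = (\<Sum>i\<le>m. (\<bar>z gchoose i\<bar> + (if i = 0 then 0 else \<bar>z gchoose (i-1)\<bar>)
         - (if K + 2 \<le> i then 2 * \<bar>z gchoose i\<bar> else 0)) * \<bar>y gchoose (m-i)\<bar>) + 2 * EE z y K m"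
  proof -
    have d: "(\<Sum>i\<le>m. (if K + 2 \<le> i then 2 * \<bar>z gchoose i\<bar> else 0) * \<bar>y gchoose (m-i)\<bar>) = 2 * EE z y K m"
      unfolding EE_def sum_distrib_left by (rule sum.cong) auto
    have "(\<Sum>i\<le>m. (\<bar>z gchoose i\<bar> + (if i = 0 then 0 else \<bar>z gchoose (i-1)\<bar>)
         - (if K + 2 \<le> i then 2 * \<bar>z gchoose i\<bar> else 0)) * \<bar>y gchoose (m-i)\<bar>)
       = CC z y m + (\<Sum>i\<le>m. (if i = 0 then 0 else \<bar>z gchoose (i-1)\<bar>) * \<bar>y gchoose (m-i)\<bar>)
         - (\<Sum>i\<le>m. (if K + 2 \<le> i then 2 * \<bar>z gchoose i\<bar> else 0) * \<bar>y gchoose (m-i)\<bar>)"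
      unfolding CC_def by (simp only: left_diff_distrib distrib_right sum.distrib sum_subtractf)
    then show ?thesis unfolding d shiftQ2 by simp
  qed
  also have "\<dots> \<le> CC (z+1) y m + 2 * EE z y K m"
    unfolding CC_def by (intro add_right_mono sum_mono mult_right_mono pas_low assms) auto
  finally show ?thesis .
qed

lemma EE_bound:
  assumes K1: "1 \<le> K" and zK: "real K \<le> z" "z < real K + 1"
    and Y: "\<And>j. \<bar>(y::real) gchoose j\<bar> \<le> Y"
  shows "EE z y K m \<le> (if K + 2 \<le> m then Y / (4 * real K) else 0)"
proof -
  have Y0: "0 \<le> Y" using Y[of 0] by simp
  have "EE z y K m \<le> (\<Sum>i\<le>m. if K + 2 \<le> i then \<bar>z gchoose i\<bar> * Y else 0)"
    unfolding EE_def by (intro sum_mono) (auto intro: mult_left_mono Y)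
  also have "\<dots> = (\<Sum>i\<in>{..m} \<inter> {i. K + 2 \<le> i}. \<bar>z gchoose i\<bar> * Y)"
    by (subst sum.inter_restrict) auto
  also have "{..m} \<inter> {i. K + 2 \<le> i} = {K+2..m}" by auto
  also have "(\<Sum>i\<in>{K+2..m}. \<bar>z gchoose i\<bar> * Y) = Y * (\<Sum>i\<in>{K+2..m}. \<bar>z gchoose i\<bar>)"
    by (simp add: sum_distrib_left mult.commute)
  also have "\<dots> \<le> (if K + 2 \<le> m then Y / (4 * real K) else 0)"
  proof (cases "K + 2 \<le> m")
    case True
    have "Y * (\<Sum>i\<in>{K+2..m}. \<bar>z gchoose i\<bar>) \<le> Y * (1 / (4 * real K))"
      by (intro mult_left_mono tail_sum K1 zK Y0)
    then show ?thesis using True by simp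
  next
    case False
    then show ?thesis by simp
  qed
  finally show ?thesis .
qed

definition TT :: "real \<Rightarrow> nat \<Rightarrow> nat \<Rightarrow> real" where
  "TT w K n = (\<Sum>k\<le>n. if K + 2 \<le> n - k then \<bar>w gchoose k\<bar> else 0)"

lemma LI_step:
  assumes K1: "1 \<le> K" and zK: "real K \<le> z" "z < real K + 1"
    and Y: "\<And>j. \<bar>(y::real) gchoose j\<bar> \<le> Y"
  shows "LI n z (y+1) w \<le> LI n (z+1) y w + Y / (2 * real K) * TT w K n"
proof -
  have "LI n z (y+1) w \<le> (\<Sum>k\<le>n. \<bar>w gchoose k\<bar> * (CC (z+1) y (n-k) + 2 * EE z y K (n-k)))"
    unfolding LI_def by (intro sum_mono mult_left_mono CC_step zK) auto
  also have "\<dots> \<le> (\<Sum>k\<le>n. \<bar>w gchoose k\<bar> * (CC (z+1) y (n-k) + 2 * (if K + 2 \<le> n - k then Y / (4 * real K) else 0)))"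
    by (intro sum_mono mult_left_mono add_left_mono EE_bound[OF K1 zK Y]) auto
  also have "\<dots> = LI n (z+1) y w + Y / (2 * real K) * TT w K n"
    unfolding LI_def TT_def sum_distrib_left sum.distrib[symmetric]
    by (rule sum.cong) (auto simp: algebra_simps)
  finally show ?thesis .
qed

lemma TT_mono: "K0 \<le> K \<Longrightarrow> TT w K n \<le> TT w K0 n"
  unfolding TT_def by (intro sum_mono) auto

lemma binom_partial_sum: "(\<Sum>k\<le>n. N choose k) \<le> 2 ^ N"
proof -
  have "(\<Sum>k\<le>n. N choose k) \<le> (\<Sum>k\<le>n+N. N choose k)" by (intro sum_mono2) auto
  also have "\<dots> = (\<Sum>k\<le>N. N choose k)"
    by (rule sum.mono_neutral_right) (auto simp: binomial_eq_0)
  also have "\<dots> = 2 ^ N" by (rule choose_row_sum)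
  finally show ?thesis .
qed

lemma count_bound:
  assumes "K \<le> n"
  shows "(\<Sum>k\<le>n. if K + 2 \<le> n - k then 1 else 0 :: real) \<le> real n - real K"
proof -
  have "(\<Sum>k\<le>n. if K + 2 \<le> n - k then 1 else 0 :: real) \<le> (\<Sum>k\<le>n. if k \<in> {..<n-K} then 1 else 0)"
    by (intro sum_mono) auto
  also have "\<dots> = (\<Sum>k\<in>{..n} \<inter> {..<n-K}. 1)" by (subst sum.inter_restrict) auto
  also have "{..n} \<inter> {..<n-K} = {..<n-K}" by auto
  also have "(\<Sum>k\<in>{..<n-K}. (1::real)) = real n - real K" using assms by simp
  finally show ?thesis .
qed

lemma TT_bound:
  assumes "real F \<le> w" "w < real F + 1" "K \<le> n"
  shows "TT w K n \<le> 2 ^ (F+1) + (real n - real K)"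
proof -
  have "TT w K n \<le> (\<Sum>k\<le>n. real ((F+1) choose k) + (if K + 2 \<le> n - k then 1 else 0))"
    unfolding TT_def using gb_le_binom1[OF assms(1,2)] by (intro sum_mono) auto
  also have "\<dots> = real (\<Sum>k\<le>n. (F+1) choose k) + (\<Sum>k\<le>n. if K + 2 \<le> n - k then 1 else 0)"
    by (simp add: sum.distrib)
  also have "\<dots> \<le> 2 ^ (F+1) + (real n - real K)"
  proof (rule add_mono)
    have "real (\<Sum>k\<le>n. (F+1) choose k) \<le> real (2 ^ (F+1))"
      using binom_partial_sum by (simp only: of_nat_le_iff)
    then show "real (\<Sum>k\<le>n. (F+1) choose k) \<le> 2 ^ (F+1)" by simp
  qed (rule count_bound[OF assms(3)])
  finally show ?thesis .
qed

lemma phase: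
  assumes K01: "1 \<le> K0" and c: "0 \<le> c" "c < 1" and a: "0 \<le> a" "a < 1"
    and S: "TT w K0 n \<le> S"
  shows "K0 \<le> K \<Longrightarrow> LI n (real K + c) (real p + a) w \<le> LI n (real (K+p) + c) a w + 2 ^ p * S / real K0"
proof (induction p arbitrary: K)
  case 0
  have "0 \<le> TT w K0 n" unfolding TT_def by (intro sum_nonneg) auto
  then have "0 \<le> S" using S by linarith
  then show ?case using K01 by simp
next
  case (Suc p)
  have K1: "1 \<le> K" using Suc.prems K01 by simp
  have zK: "real K \<le> real K + c" "real K + c < real K + 1" using c by auto
  have Y: "\<bar>(real p + a) gchoose j\<bar> \<le> 2 ^ (p+1)" for j
    by (rule gb_le_pow) (use a in auto)
  have TT0: "0 \<le> TT w K n" unfolding TT_def by (intro sum_nonneg) auto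
  have TTS: "TT w K n \<le> S" using TT_mono[OF Suc.prems, of w n] S by linarith
  have "LI n (real K + c) (real (Suc p) + a) w = LI n (real K + c) ((real p + a) + 1) w"
    by (simp add: algebra_simps)
  also have "\<dots> \<le> LI n (real K + c + 1) (real p + a) w + 2 ^ (p+1) / (2 * real K) * TT w K n"
    by (rule LI_step[OF K1 zK Y])
  also have "2 ^ (p+1) / (2 * real K) * TT w K n \<le> 2 ^ (p+1) / (2 * real K0) * S"
    by (intro mult_mono divide_left_mono TTS TT0) (use Suc.prems K01 in auto)
  also have "LI n (real K + c + 1) (real p + a) w = LI n (real (K+1) + c) (real p + a) w"
    by (simp add: algebra_simps)
  also have "\<dots> \<le> LI n (real (K+1+p) + c) a w + 2 ^ p * S / real K0"
    using Suc.IH[of "K+1"] Suc.prems by simp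
  finally show ?case by (simp add: algebra_simps)
qed



lemma powr23: "2 powr (2/3) \<le> (1.6::real)"
proof -
  have t0: "0 < (2::real) powr (2/3)" by simp
  have "(2 powr (2/3)) ^ 3 = ((2::real) powr (2/3)) powr (real 3)"
    using t0 by (rule powr_realpow[symmetric])
  also have "\<dots> = 4" by (simp add: powr_powr)
  finally have e: "(2 powr (2/3)) ^ 3 = (4::real)" .
  show ?thesis
  proof (rule ccontr)
    assume "\<not> ?thesis"
    then have "(1.6::real) ^ 3 < (2 powr (2/3)) ^ 3"
      by (intro power_strict_mono) auto
    then have "(1.6::real) ^ 3 < 4" using e by simp
    moreover have "(1.6::real) ^ 3 = 4.096" by (simp add: power3_eq_cube)
    ultimately show False by simp
  qed
qed

lemma final_arith:
  fixes n K0 p q :: nat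
  assumes n4: "4 \<le> n" and K1: "1 \<le> K0" and nK: "n \<le> 3*K0 + 2" and s: "K0 + p + q + 1 \<le> n"
  shows "2^p * (2^(q+1) + (real n - real K0)) / real K0
       + 2^q * (2^(0+1) + (real n - real (K0+p))) / real (K0+p)
       \<le> 2 powr (2*real n/3) * (10 + 2*ln (real n))"
proof -
  define M where "M = p + q"
  have K0pos: "0 < real K0" using K1 by simp
  have p2: "(2::real)^p \<le> 2^M" "(2::real)^q \<le> 2^M" unfolding M_def by (intro power_increasing; simp)+
  have nK0: "real K0 \<le> real n" using s by simp
  have E2: "2^q * (2^(0+1) + (real n - real (K0+p))) / real (K0+p) \<le> 2^M * (2 + (real n - real K0)) / real K0"
  proof -
    have "2^q * (2^(0+1) + (real n - real (K0+p))) / real (K0+p) \<le> 2^q * (2 + (real n - real K0)) / real (K0+p)"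
      by (intro divide_right_mono mult_left_mono) auto
    also have "\<dots> \<le> 2^q * (2 + (real n - real K0)) / real K0"
      using nK0 K0pos by (intro divide_left_mono) auto
    also have "\<dots> \<le> 2^M * (2 + (real n - real K0)) / real K0"
      using nK0 K0pos p2 by (intro divide_right_mono mult_right_mono) auto
    finally show ?thesis .
  qed
  have E1: "2^p * (2^(q+1) + (real n - real K0)) / real K0 \<le> (2^(M+1) + 2^M * (real n - real K0)) / real K0"
  proof -
    have "2^p * (2^(q+1) + (real n - real K0)) = 2^(M+1) + 2^p * (real n - real K0)"
      unfolding M_def by (simp add: algebra_simps power_add)
    also have "\<dots> \<le> 2^(M+1) + 2^M * (real n - real K0)"
      using nK0 p2 by (intro add_left_mono mult_right_mono) auto
    finally show ?thesis using K0pos by (intro divide_right_mono) auto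
  qed
  have sum: "(2^(M+1) + 2^M * (real n - real K0)) / real K0 + 2^M * (2 + (real n - real K0)) / real K0
      = 2^(M+1) * ((real n + 2 - real K0) / real K0)"
    using K0pos by (simp add: field_simps power_add)
  have r6: "(real n + 2 - real K0) / real K0 \<le> 6"
  proof -
    have "n + 2 \<le> 7 * K0" using n4 K1 nK by linarith
    then have "real n + 2 \<le> 7 * real K0" by linarith
    then show ?thesis using K0pos by (simp add: divide_simps)
  qed
  have pw: "(2::real)^(M+1) \<le> 1.6 * 2 powr (2*real n/3)"
  proof -
    have "(2::real)^(M+1) = 2 powr (real (M+1))" by (rule powr_realpow[symmetric]) simp
    also have "\<dots> \<le> 2 powr (2*real n/3 + 2/3)"
    proof (rule powr_mono)
      have "3 * (M + 1) \<le> 2 * n + 2" unfolding M_def using s nK by arith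
      then have "3 * real (M+1) \<le> 2 * real n + 2" by linarith
      then show "real (M+1) \<le> 2*real n/3 + 2/3" by simp
    qed simp
    also have "\<dots> = 2 powr (2*real n/3) * 2 powr (2/3)" by (simp add: powr_add)
    also have "\<dots> \<le> 2 powr (2*real n/3) * 1.6" by (intro mult_left_mono powr23) simp
    finally show ?thesis by simp
  qed
  have lnn: "0 \<le> ln (real n)" using n4 by simp
  have "2^p * (2^(q+1) + (real n - real K0)) / real K0
       + 2^q * (2^(0+1) + (real n - real (K0+p))) / real (K0+p)
       \<le> 2^(M+1) * ((real n + 2 - real K0) / real K0)" using E1 E2 sum by linarith
  also have "\<dots> \<le> (1.6 * 2 powr (2*real n/3)) * 6"
    by (intro mult_mono pw r6) (use K0pos nK0 in auto)
  also have "\<dots> \<le> 2 powr (2*real n/3) * (10 + 2*ln (real n))"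
    using lnn by (simp add: algebra_simps)
  finally show ?thesis .
qed


theorem theorem1:
  fixes n r1 r2 r3 :: nat and a1 a2 a3 :: real
  assumes "n \<ge> 4"
    and "r1 + r2 + r3 = n - 1"
    and "-1 < a1" and "a1 < 1"
    and "0 \<le> a2" and "a2 < 1" and "0 \<le> a3" and "a3 < 1"
    and "a1 + a2 + a3 = 1"
    and "real r1 + a1 \<ge> real r2 + a2"
    and "real r1 + a1 \<ge> real r3 + a3"
  shows "frakL n r1 r2 r3 a1 a2 a3
           \<le> frakL n (n - 1) 0 0 a1 a2 a3 + 2 powr (2 * real n / 3) * (10 + 2 * ln (real n))"
proof -
  note A = assms
  have npos: "0 < real n" using A(1) by simp
  have sumr: "real r1 + real r2 + real r3 = real n - 1" using A(1,2)
    by (metis Suc_le_D add_diff_cancel_left' le_add1 numeral_le_iff of_nat_add of_nat_diff of_nat_1 one_le_numeral order_trans)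
  have L1: "frakL n r1 r2 r3 a1 a2 a3 = LI n (real r1 + a1) (real r2 + a2) (real r3 + a3)"
    unfolding frakL_def lebesgue_LI using npos by simp
  have L2: "frakL n (n - 1) 0 0 a1 a2 a3 = LI n (real (n-1) + a1) a2 a3"
    unfolding frakL_def lebesgue_LI using npos by simp
  obtain K0 c where Kc: "real K0 + c = real r1 + a1" "0 \<le> c" "c < 1" "K0 \<le> r1"
  proof (cases "0 \<le> a1")
    case True
    then show ?thesis using that[of r1 a1] A by simp
  next
    case False
    then have "1 \<le> r1" using A(5,10) by (cases r1) auto
    then show ?thesis using that[of "r1 - 1" "a1 + 1"] A False by (auto simp: of_nat_diff)
  qed
  have third: "real n \<le> 3 * (real K0 + c)"
  proof -
    have "real n = real r1 + real r2 + real r3 + (a1 + a2 + a3)" using sumr A(9) by simp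
    also have "\<dots> \<le> 3 * (real r1 + a1)" using A(10,11) by simp
    finally show ?thesis using Kc(1) by simp
  qed
  then have "real n < 3 * real K0 + 3" using Kc(3) by (simp add: distrib_left)
  then have nK: "n \<le> 3 * K0 + 2" by linarith
  have K01: "1 \<le> K0" using nK A(1) by linarith
  have sK: "K0 + r2 + r3 + 1 \<le> n" using Kc(4) A(1,2) by linarith
  have T1: "TT (real r3 + a3) K0 n \<le> 2 ^ (r3+1) + (real n - real K0)"
    by (rule TT_bound) (use A sK in auto)
  have P1: "LI n (real K0 + c) (real r2 + a2) (real r3 + a3)
      \<le> LI n (real (K0 + r2) + c) a2 (real r3 + a3) + 2 ^ r2 * (2 ^ (r3+1) + (real n - real K0)) / real K0"
    by (rule phase[OF K01 Kc(2,3) A(5,6) T1]) simp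
  have K11: "1 \<le> K0 + r2" using K01 by simp
  have T2: "TT a2 (K0 + r2) n \<le> 2 ^ (0+1) + (real n - real (K0 + r2))"
    by (rule TT_bound) (use A sK in auto)
  have P2: "LI n (real (K0 + r2) + c) (real r3 + a3) a2
      \<le> LI n (real (K0 + r2 + r3) + c) a3 a2 + 2 ^ r3 * (2 ^ (0+1) + (real n - real (K0 + r2))) / real (K0 + r2)"
    by (rule phase[OF K11 Kc(2,3) A(7,8) T2]) simp
  have fin: "real (K0 + r2 + r3) + c = real (n-1) + a1"
    using Kc(1) sumr A(1) by (simp add: of_nat_diff)
  have "frakL n r1 r2 r3 a1 a2 a3 = LI n (real K0 + c) (real r2 + a2) (real r3 + a3)"
    unfolding L1 Kc(1) ..
  also have "\<dots> \<le> LI n (real (K0 + r2) + c) a2 (real r3 + a3) + 2 ^ r2 * (2 ^ (r3+1) + (real n - real K0)) / real K0"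
    by (rule P1)
  also have "LI n (real (K0 + r2) + c) a2 (real r3 + a3) = LI n (real (K0 + r2) + c) (real r3 + a3) a2"
    by (rule LI_swap)
  also have "\<dots> \<le> LI n (real (K0 + r2 + r3) + c) a3 a2 + 2 ^ r3 * (2 ^ (0+1) + (real n - real (K0 + r2))) / real (K0 + r2)"
    by (rule P2)
  also have "LI n (real (K0 + r2 + r3) + c) a3 a2 = frakL n (n - 1) 0 0 a1 a2 a3"
    unfolding L2 fin by (rule LI_swap)
  finally have "frakL n r1 r2 r3 a1 a2 a3 \<le> frakL n (n - 1) 0 0 a1 a2 a3
      + (2 ^ r2 * (2 ^ (r3+1) + (real n - real K0)) / real K0
       + 2 ^ r3 * (2 ^ (0+1) + (real n - real (K0 + r2))) / real (K0 + r2))"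
    by linarith
  also have "\<dots> \<le> frakL n (n - 1) 0 0 a1 a2 a3 + 2 powr (2 * real n / 3) * (10 + 2 * ln (real n))"
    using final_arith[OF A(1) K01 nK sK] by linarith
  finally show ?thesis .
qed

end
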